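(* $\mathfrak{L}(\mathbb{Q}^+) \subsetneq \mathfrak{L}(SL(2,\mathbb{Q}))$.
   Context: For a group $G$ with identity $e$, a $G$-automaton is a tuple $(Q,\Sigma,G,\delta,q_0,Q_a)$ where $Q$ is a finite set of states, $\Sigma$ a finite input alphabet, $q_0\in Q$ the initial state, $Q_a\subseteq Q$ the accepting states, and $\delta$ assigns to each $(q,\sigma)\in Q\times(\Sigma\cup\{\varepsilon\})$ a finite set of pairs $(q',m)\in Q\times G$. The register holds an element of $G$, initially $e$; using a transition $(q',m)\in\delta(q,\sigma)$ the automaton reads $\sigma$ (or nothing), moves to $q'$ and replaces the register content $x$ by $xm$. A word is accepted if some computation reads it entirely and ends in an accepting state with register equal to $e$. $\mathfrak{L}(G)$ is the class of languages recognized by $G$-automata. $\mathbb{Q}^+$ is the multiplicative group of positive rationals; $SL(2,\mathbb{Q})$ is the group of $2\times2$ rational matrices of determinant $1$. *)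

theory Defs
  imports "HOL-Algebra.Group" "HOL-Analysis.Determinants"
begin

text \<open>States are natural numbers (any finite state
set can be renamed into nat). A transition label is an input symbol
(Some a) or the empty word (None).\<close>

inductive gruns :: "('g, 'b) monoid_scheme \<Rightarrow> (nat \<Rightarrow> 'a option \<Rightarrow> (nat \<times> 'g) set)
    \<Rightarrow> nat \<Rightarrow> 'g \<Rightarrow> 'a list \<Rightarrow> nat \<Rightarrow> 'g \<Rightarrow> bool"
  for G delta where
  stop: "gruns G delta q x [] q x"
| eps: "(q', m) \<in> delta q None \<Longrightarrow> gruns G delta q' (x \<otimes>\<^bsub>G\<^esub> m) w q'' y
          \<Longrightarrow> gruns G delta q x w q'' y"
| read: "(q', m) \<in> delta q (Some a) \<Longrightarrow> gruns G delta q' (x \<otimes>\<^bsub>G\<^esub> m) w q'' y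
          \<Longrightarrow> gruns G delta q x (a # w) q'' y"

definition g_automaton :: "('g, 'b) monoid_scheme \<Rightarrow> nat set \<Rightarrow> 'a set
    \<Rightarrow> (nat \<Rightarrow> 'a option \<Rightarrow> (nat \<times> 'g) set) \<Rightarrow> nat \<Rightarrow> nat set \<Rightarrow> bool" where
  "g_automaton G Q Sig delta q0 Qa \<longleftrightarrow>
     finite Q \<and> finite Sig \<and> q0 \<in> Q \<and> Qa \<subseteq> Q \<and>
     (\<forall>q \<in> Q. \<forall>s \<in> {None} \<union> Some ` Sig.
         finite (delta q s) \<and> delta q s \<subseteq> Q \<times> carrier G) \<and>
     (\<forall>q s. q \<notin> Q \<or> s \<notin> {None} \<union> Some ` Sig \<longrightarrow> delta q s = {})"

definition g_accepted :: "('g, 'b) monoid_scheme \<Rightarrow> 'a set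
    \<Rightarrow> (nat \<Rightarrow> 'a option \<Rightarrow> (nat \<times> 'g) set) \<Rightarrow> nat \<Rightarrow> nat set \<Rightarrow> 'a list set" where
  "g_accepted G Sig delta q0 Qa =
     {w \<in> lists Sig. \<exists>qf \<in> Qa. gruns G delta q0 \<one>\<^bsub>G\<^esub> w qf \<one>\<^bsub>G\<^esub>}"

definition gLang :: "('g, 'b) monoid_scheme \<Rightarrow> 'a set \<Rightarrow> 'a list set set" where
  "gLang G Sig = {L. \<exists>Q delta q0 Qa. g_automaton G Q Sig delta q0 Qa \<and>
                        L = g_accepted G Sig delta q0 Qa}"

definition Qpos :: "rat monoid" where
  "Qpos = \<lparr>carrier = {q. 0 < q}, monoid.mult = (*), monoid.one = 1\<rparr>"

definition SL2Q :: "(rat^2^2) monoid" where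
  "SL2Q = \<lparr>carrier = {A. det A = 1}, monoid.mult = (**), monoid.one = mat 1\<rparr>"

end

theory Submission imports Defs begin

lemma gruns_append:
  assumes "gruns G d q x u p z" "gruns G d p z v q' y"
  shows "gruns G d q x (u@v) q' y"
  using assms by (induction rule: gruns.induct) (auto intro: gruns.intros)

lemma gruns_split:
  "gruns G d q x w q' y \<Longrightarrow> w = u @ v \<Longrightarrow> \<exists>p z. gruns G d q x u p z \<and> gruns G d p z v q' y"
proof (induction arbitrary: u rule: gruns.induct)
  case (stop q x)
  then show ?case by (auto intro: gruns.stop)
next
  case (eps q1 m q x w q'' y)
  then obtain p z where "gruns G d q1 (x \<otimes>\<^bsub>G\<^esub> m) u p z" "gruns G d p z v q'' y" by blast
  then show ?case using eps(1) by (blast intro: gruns.eps)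
next
  case (read q1 m q a x w q'' y)
  show ?case
  proof (cases u)
    case Nil
    then show ?thesis using read by (auto intro: gruns.stop gruns.read)
  next
    case (Cons b u')
    then have "w = u' @ v" "b = a" using read.prems by auto
    then obtain p z where "gruns G d q1 (x \<otimes>\<^bsub>G\<^esub> m) u' p z" "gruns G d p z v q'' y"
      using read.IH by blast
    then show ?thesis using read(1) Cons \<open>b = a\<close> by (blast intro: gruns.read)
  qed
qed

lemma trans_in:
  assumes "g_automaton G Q Sig d q0 Qa" "(q1, m) \<in> d q s"
  shows "q \<in> Q \<and> q1 \<in> Q \<and> m \<in> carrier G"
  using assms unfolding g_automaton_def by blast

lemma gruns_Q:
  "gruns G d q x w q' y \<Longrightarrow> g_automaton G Q Sig d q0 Qa \<Longrightarrow> q' = q \<or> q' \<in> Q"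
  apply (induction rule: gruns.induct)
    apply simp
   apply (metis trans_in)
  apply (metis trans_in)
  done

lemma Qpos_simps[simp]: "x \<otimes>\<^bsub>Qpos\<^esub> y = x * y" "\<one>\<^bsub>Qpos\<^esub> = 1" "carrier Qpos = {q. 0 < q}"
  by (simp_all add: Qpos_def)

lemma gruns_shift:
  "gruns Qpos d q x w q' y \<Longrightarrow> \<exists>g. y = x * g \<and> (\<forall>x'. gruns Qpos d q x' w q' (x' * g))"
proof (induction rule: gruns.induct)
  case (stop q x)
  then show ?case by (intro exI[of _ 1]) (auto intro: gruns.stop)
next
  case (eps q1 m q x w q'' y)
  then obtain g where g: "y = x * m * g" "\<forall>x'. gruns Qpos d q1 x' w q'' (x' * g)" by auto
  have "gruns Qpos d q x' w q'' (x' * (m * g))" for x'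
  proof -
    have "gruns Qpos d q1 (x' \<otimes>\<^bsub>Qpos\<^esub> m) w q'' (x' * m * g)" using g(2) by simp
    then have "gruns Qpos d q x' w q'' (x' * m * g)"
      by (rule gruns.eps[where delta=d and q=q, OF eps(1)])
    then show ?thesis by (simp add: mult.assoc)
  qed
  then show ?case using g(1) by (intro exI[of _ "m * g"]) (simp add: mult.assoc)
next
  case (read q1 m q a x w q'' y)
  then obtain g where g: "y = x * m * g" "\<forall>x'. gruns Qpos d q1 x' w q'' (x' * g)" by auto
  have "gruns Qpos d q x' (a # w) q'' (x' * (m * g))" for x'
  proof -
    have "gruns Qpos d q1 (x' \<otimes>\<^bsub>Qpos\<^esub> m) w q'' (x' * m * g)" using g(2) by simp
    then have "gruns Qpos d q x' (a # w) q'' (x' * m * g)"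
      by (rule gruns.read[where delta=d and q=q, OF read(1)])
    then show ?thesis by (simp add: mult.assoc)
  qed
  then show ?case using g(1) by (intro exI[of _ "m * g"]) (simp add: mult.assoc)
qed

definition R where "R d q w q' g \<longleftrightarrow> gruns Qpos d q 1 w q' g"

lemma R_comp: "R d q u p g1 \<Longrightarrow> R d p v q' g2 \<Longrightarrow> R d q (u@v) q' (g1*g2)"
proof -
  assume a: "R d q u p g1" "R d p v q' g2"
  obtain g where "g2 = 1 * g" "\<forall>x'. gruns Qpos d p x' v q' (x' * g)"
    using gruns_shift a(2) unfolding R_def by blast
  then have "gruns Qpos d p g1 v q' (g1 * g2)" by simp
  then show ?thesis using gruns_append[of Qpos d q 1 u p g1] a(1) unfolding R_def by blast
qed

lemma R_split: "R d q (u@v) q' g \<Longrightarrow> \<exists>p g1 g2. R d q u p g1 \<and> R d p v q' g2 \<and> g = g1*g2"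
proof -
  assume "R d q (u@v) q' g"
  then have "gruns Qpos d q 1 (u@v) q' g" unfolding R_def .
  from gruns_split[OF this refl] obtain p z where 1: "gruns Qpos d q 1 u p z" "gruns Qpos d p z v q' g"
    by blast
  from gruns_shift[OF 1(2)] obtain g2 where "g = z * g2" "\<forall>x'. gruns Qpos d p x' v q' (x' * g2)"
    by blast
  then have "g = z * g2" "gruns Qpos d p 1 v q' g2" by (auto dest: spec[of _ 1])
  then show ?thesis using 1(1) unfolding R_def by blast
qed

lemma R_multi:
  "R d q (concat (map f [a..<b]) @ rest) qf g \<Longrightarrow> a \<le> b \<Longrightarrow>
   \<exists>ps gs. ps a = q \<and> (\<forall>t. a \<le> t \<and> t < b \<longrightarrow> R d (ps t) (f t) (ps (Suc t)) (gs t))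
      \<and> R d (ps b) rest qf (gs b) \<and> g = prod gs {a..b}"
proof (induction "b - a" arbitrary: a q g)
  case 0
  then have "a = b" by simp
  then show ?case using 0 by (intro exI[of _ "\<lambda>_. q"] exI[of _ "\<lambda>_. g"]) auto
next
  case (Suc n)
  then have ab: "a < b" by simp
  then have "[a..<b] = a # [Suc a..<b]" by (simp add: upt_conv_Cons)
  then have "R d q (f a @ (concat (map f [Suc a..<b]) @ rest)) qf g" using Suc.prems by simp
  then obtain p g1 g2 where s: "R d q (f a) p g1" "R d p (concat (map f [Suc a..<b]) @ rest) qf g2"
    "g = g1 * g2" using R_split by blast
  obtain ps gs where IH: "ps (Suc a) = p" "\<forall>t. Suc a \<le> t \<and> t < b \<longrightarrow> R d (ps t) (f t) (ps (Suc t)) (gs t)"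
    "R d (ps b) rest qf (gs b)" "g2 = prod gs {Suc a..b}"
  proof -
    have "n = b - Suc a" using Suc.hyps(2) by arith
    from Suc.hyps(1)[OF this s(2)] ab show ?thesis using that by auto
  qed
  let ?ps = "ps(a := q)" and ?gs = "gs(a := g1)"
  have "prod ?gs {a..b} = ?gs a * prod ?gs {Suc a..b}"
    using ab by (simp add: prod.atLeast_Suc_atMost)
  also have "prod ?gs {Suc a..b} = prod gs {Suc a..b}" by (rule prod.cong) auto
  finally have pr: "prod ?gs {a..b} = g" using s(3) IH(4) by simp
  have "\<forall>t. a \<le> t \<and> t < b \<longrightarrow> R d (?ps t) (f t) (?ps (Suc t)) (?gs t)"
  proof (intro allI impI)
    fix t assume t: "a \<le> t \<and> t < b"
    show "R d (?ps t) (f t) (?ps (Suc t)) (?gs t)"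
    proof (cases "t = a")
      case True then show ?thesis using s(1) IH(1) by simp
    next
      case False then show ?thesis using IH(2) t by simp
    qed
  qed
  then show ?case using IH(3) ab pr by (intro exI[of _ ?ps] exI[of _ ?gs]) auto
qed

lemma R_concat:
  "(\<forall>t. a \<le> t \<and> t < b \<longrightarrow> R d (ps t) (f t) (ps (Suc t)) (gs t)) \<Longrightarrow> a \<le> b \<Longrightarrow>
   R d (ps a) (concat (map f [a..<b])) (ps b) (prod gs {a..<b})"
proof (induction b)
  case 0
  then show ?case by (simp add: R_def gruns.stop)
next
  case (Suc b)
  show ?case
  proof (cases "a = Suc b")
    case True then show ?thesis by (simp add: R_def gruns.stop)
  next
    case False
    then have ab: "a \<le> b" using Suc.prems by simp
    have 1: "R d (ps a) (concat (map f [a..<b])) (ps b) (prod gs {a..<b})"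
      using Suc.IH Suc.prems(1) ab by auto
    have 2: "R d (ps b) (f b) (ps (Suc b)) (gs b)" using Suc.prems(1) ab by auto
    have "R d (ps a) (concat (map f [a..<b]) @ f b) (ps (Suc b)) (prod gs {a..<b} * gs b)"
      using R_comp[OF 1 2] .
    then show ?thesis using ab by (simp add: prod.atLeastLessThan_Suc)
  qed
qed

lemma pigeon3:
  fixes ps :: "nat \<Rightarrow> nat"
  assumes "finite Q" "\<forall>t<N. ps t \<in> Q" "N > 2 * card Q"
  shows "\<exists>i j k. i < j \<and> j < k \<and> k < N \<and> ps i = ps j \<and> ps j = ps k"
proof (rule ccontr)
  assume H: "\<not> ?thesis"
  define F where "F p = {t. t < N \<and> ps t = p}" for p
  have K: "a < b \<Longrightarrow> b < c \<Longrightarrow> a \<in> F p \<Longrightarrow> b \<in> F p \<Longrightarrow> c \<in> F p \<Longrightarrow> False" for a b c p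
  proof -
    assume "a < b" "b < c" "a \<in> F p" "b \<in> F p" "c \<in> F p"
    then have "a < b \<and> b < c \<and> c < N \<and> ps a = ps b \<and> ps b = ps c" unfolding F_def by auto
    then show False using H by blast
  qed
  have le2: "card (F p) \<le> 2" for p
  proof (rule ccontr)
    assume "\<not> ?thesis"
    then have "Suc (Suc (Suc 0)) \<le> card (F p)" by simp
    then obtain x y z where d: "x \<noteq> y" "x \<noteq> z" "y \<noteq> z" and m: "x \<in> F p" "y \<in> F p" "z \<in> F p"
      by (auto simp: card_le_Suc_iff)
    consider "x<y" "y<z" | "x<z" "z<y" | "y<x" "x<z" | "y<z" "z<x" | "z<x" "x<y" | "z<y" "y<x"
      using d by linarith
    then show False
    proof cases
      case 1 then show ?thesis using K[OF _ _ m(1) m(2) m(3)] by blast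
    next
      case 2 then show ?thesis using K[OF _ _ m(1) m(3) m(2)] by blast
    next
      case 3 then show ?thesis using K[OF _ _ m(2) m(1) m(3)] by blast
    next
      case 4 then show ?thesis using K[OF _ _ m(2) m(3) m(1)] by blast
    next
      case 5 then show ?thesis using K[OF _ _ m(3) m(1) m(2)] by blast
    next
      case 6 then show ?thesis using K[OF _ _ m(3) m(2) m(1)] by blast
    qed
  qed
  have "{t. t < N} = (\<Union>p\<in>Q. F p)" using assms(2) unfolding F_def by auto
  then have "card {t. t < N} \<le> (\<Sum>p\<in>Q. card (F p))"
    using card_UN_le[OF assms(1), of F] by simp
  also have "\<dots> \<le> card Q * 2" using sum_bounded_above[of Q "\<lambda>p. card (F p)" 2] le2 by simp
  finally show False using assms(3) by simp
qed

section \<open>Block words\<close>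

definition blk :: "nat \<Rightarrow> nat list" where "blk t = 0 # replicate (Suc t) 1"
definition BW where "BW a b = concat (map blk [a..<b])"

lemma BW_app: "a \<le> b \<Longrightarrow> b \<le> c \<Longrightarrow> BW a b @ BW b c = BW a c"
proof -
  assume "a \<le> b" "b \<le> c"
  then have "[a..<c] = [a..<b] @ [b..<c]" using upt_add_eq_append[of a b "c - b"] by simp
  then show ?thesis unfolding BW_def by simp
qed

lemma BW_Cons: "a < b \<Longrightarrow> BW a b = blk a @ BW (Suc a) b"
  unfolding BW_def by (simp add: upt_conv_Cons)

lemma BW_lists: "BW a b \<in> lists {0,1}"
  unfolding BW_def blk_def lists_eq_set by (auto simp: set_replicate_conv_if split: if_splits)

lemma swap_ne:
  assumes "i < j" "j < k"
  shows "BW i j @ BW j k \<noteq> BW j k @ BW i j"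
proof
  assume E: "BW i j @ BW j k = BW j k @ BW i j"
  have "BW i j @ BW j k = blk i @ BW (Suc i) k"
    using assms BW_app[of "Suc i" j k] BW_Cons[of i j] by simp
  also have "\<dots> = blk i @ blk (Suc i) @ BW (Suc (Suc i)) k"
    using assms BW_Cons[of "Suc i" k] by simp
  finally have "(BW i j @ BW j k) ! (i + 2) = 0" by (simp add: blk_def nth_append)
  moreover have "(BW j k @ BW i j) ! (i + 2) = 1"
    using assms BW_Cons[of j k] by (simp add: blk_def nth_append)
  ultimately show False using E by simp
qed

definition Lpal :: "nat list set" where "Lpal = {u @ 2 # rev u | u. u \<in> lists {0,1}}"

lemma no2: "xs \<in> lists {0,1} \<Longrightarrow> (2::nat) \<notin> set xs"
  by auto

lemma not_Qpos: "Lpal \<notin> gLang Qpos {0,1,2}"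
proof
  assume "Lpal \<in> gLang Qpos {0,1,2}"
  then obtain Q d q0 Qa where A: "g_automaton Qpos Q {0,1,2} d q0 Qa"
    and L: "Lpal = g_accepted Qpos {0,1,2} d q0 Qa"
    unfolding gLang_def by blast
  define N where "N = Suc (2 * card Q)"
  define W where "W = BW 0 N"
  define rest where "rest = 2 # rev W"
  have WL: "W \<in> lists {0,1}" unfolding W_def by (rule BW_lists)
  have "W @ rest \<in> Lpal" unfolding Lpal_def rest_def using WL by blast
  then have "W @ rest \<in> g_accepted Qpos {0,1,2} d q0 Qa" using L by simp
  then obtain qf where qf0: "qf \<in> Qa" "gruns Qpos d q0 1 (W @ rest) qf 1"
    unfolding g_accepted_def by auto
  then have qf: "qf \<in> Qa" "R d q0 (concat (map blk [0..<N]) @ rest) qf 1"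
    by (simp_all add: R_def W_def BW_def)
  obtain ps gs where P: "ps 0 = q0" "\<forall>t. 0 \<le> t \<and> t < N \<longrightarrow> R d (ps t) (blk t) (ps (Suc t)) (gs t)"
    "R d (ps N) rest qf (gs N)" "1 = prod gs {0..N}"
    using R_multi[OF qf(2)] by blast
  have finQ: "finite Q" and q0Q: "q0 \<in> Q" using A unfolding g_automaton_def by auto
  have inQ: "t \<le> N \<Longrightarrow> ps t \<in> Q" for t
  proof (induction t)
    case 0 then show ?case using P(1) q0Q by simp
  next
    case (Suc t)
    then have "gruns Qpos d (ps t) 1 (blk t) (ps (Suc t)) (gs t)" using P(2) by (simp add: R_def)
    from gruns_Q[OF this A] show ?case using Suc by auto
  qed
  have "\<forall>t<N. ps t \<in> Q" using inQ by simp
  moreover have "N > 2 * card Q" unfolding N_def by simp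
  ultimately obtain i j k where ijk: "i < j" "j < k" "k < N" "ps i = ps j" "ps j = ps k"
    using pigeon3[OF finQ, of N ps] by blast
  have Rall: "a \<le> b \<Longrightarrow> b \<le> N \<Longrightarrow> R d (ps a) (BW a b) (ps b) (prod gs {a..<b})" for a b
    unfolding BW_def by (rule R_concat) (use P(2) in auto)
  have a1: "R d q0 (BW 0 i) (ps i) (prod gs {0..<i})" using Rall[of 0 i] P(1) ijk by simp
  have a2: "R d (ps i) (BW j k) (ps i) (prod gs {j..<k})" using Rall[of j k] ijk by simp
  have a3: "R d (ps i) (BW i j) (ps i) (prod gs {i..<j})" using Rall[of i j] ijk by simp
  have "R d (ps k) (BW k N) (ps N) (prod gs {k..<N})" using Rall[of k N] ijk by simp
  from R_comp[OF this P(3)] have a4: "R d (ps i) (BW k N @ rest) qf (prod gs {k..<N} * gs N)"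
    using ijk by simp
  define W' where "W' = BW 0 i @ BW j k @ BW i j @ BW k N"
  have R': "R d q0 (W' @ rest) qf
        (prod gs {0..<i} * (prod gs {j..<k} * (prod gs {i..<j} * (prod gs {k..<N} * gs N))))"
    using R_comp[OF a1 R_comp[OF a2 R_comp[OF a3 a4]]] unfolding W'_def by simp
  have "prod gs {0..N} = prod gs {0..<i} * prod gs {i..<j} * prod gs {j..<k} * prod gs {k..<N} * gs N"
    using ijk by (simp add: prod.atLeastLessThan_concat atLeastLessThanSuc_atLeastAtMost[symmetric]
        prod.atLeastLessThan_Suc)
  then have "prod gs {0..<i} * (prod gs {j..<k} * (prod gs {i..<j} * (prod gs {k..<N} * gs N))) = 1"
    using P(4) by (simp add: mult_ac)
  then have "gruns Qpos d q0 1 (W' @ rest) qf 1" using R' by (simp add: R_def)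
  moreover have W'L: "W' \<in> lists {0,1}" unfolding W'_def using BW_lists by simp
  moreover have "rest \<in> lists {0,1,2}" unfolding rest_def using WL by auto
  ultimately have "W' @ rest \<in> g_accepted Qpos {0,1,2} d q0 Qa"
    unfolding g_accepted_def using qf(1) W'L by auto
  then have "W' @ rest \<in> Lpal" using L by simp
  then obtain u where u0: "W' @ rest = u @ 2 # rev u" "u \<in> lists {0,1}"
    unfolding Lpal_def by blast
  then have u: "W' @ 2 # rev W = u @ 2 # rev u" unfolding rest_def by simp
  have n1: "2 \<notin> set W'" by (rule no2[OF W'L])
  have n2: "2 \<notin> set (rev W)" using no2[OF WL] by simp
  have "W' = u \<and> rev W = rev u" using append_Cons_eq_iff[OF n1 n2, of u "rev u"] u by simp
  then have "W' = u" "rev W = rev u" by simp_all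
  then have "W' = W" by simp
  also have "W = BW 0 i @ BW i j @ BW j k @ BW k N"
    unfolding W_def using ijk BW_app by simp
  finally have "BW i j @ BW j k = BW j k @ BW i j" unfolding W'_def by simp
  then show False using swap_ne ijk by simp
qed


lemma mm2: "((X::rat^2^2) ** Y) $ i $ j = X$i$1*Y$1$j + X$i$2*Y$2$j"
  by (simp add: matrix_matrix_mult_def sum_2)
lemma eq2: "(X::rat^2^2) = Y \<longleftrightarrow> X$1$1 = Y$1$1 \<and> X$1$2 = Y$1$2 \<and> X$2$1 = Y$2$1 \<and> X$2$2 = Y$2$2"
  by (auto simp: vec_eq_iff forall_2)
lemma mat1_2: "(mat 1 :: rat^2^2)$1$1 = 1" "(mat 1 :: rat^2^2)$1$2 = 0" "(mat 1 :: rat^2^2)$2$1 = 0" "(mat 1 :: rat^2^2)$2$2 = 1"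
  by (simp_all add: mat_def)
definition mk :: "rat \<Rightarrow> rat \<Rightarrow> rat \<Rightarrow> rat \<Rightarrow> rat^2^2" where
  "mk a b c d = vector [vector [a,b], vector [c,d]]"
lemma mk_simps[simp]: "mk a b c d $1$1 = a" "mk a b c d $1$2 = b" "mk a b c d $2$1 = c" "mk a b c d $2$2 = d"
  by (simp_all add: mk_def)
lemma det_mk[simp]: "det (mk a b c d) = a * d - b * c"
  by (simp add: det_2)

lemma SL2Q_simps[simp]: "X \<otimes>\<^bsub>SL2Q\<^esub> Y = X ** Y" "\<one>\<^bsub>SL2Q\<^esub> = mat 1" "carrier SL2Q = {A. det A = 1}"
  by (simp_all add: SL2Q_def)

section \<open>Embedding of Qpos\<close>

definition phi :: "rat \<Rightarrow> rat^2^2" where "phi m = mk m 0 0 (inverse m)"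

lemma phi_mult: "phi (x * m) = phi x ** phi m"
  by (simp add: phi_def eq2 mm2 inverse_mult_distrib)
lemma phi_1: "phi 1 = mat 1" by (simp add: phi_def eq2 mat1_2)
lemma phi_eq_1: "phi y = mat 1 \<Longrightarrow> y = 1" by (simp add: phi_def eq2 mat1_2)
lemma det_phi: "0 < m \<Longrightarrow> det (phi m) = 1" by (simp add: phi_def)

definition dl :: "(nat \<Rightarrow> 'a option \<Rightarrow> (nat \<times> rat) set) \<Rightarrow> nat \<Rightarrow> 'a option \<Rightarrow> (nat \<times> (rat^2^2)) set" where
  "dl d q s = (\<lambda>(q', m). (q', phi m)) ` d q s"

lemma fwd: "gruns Qpos d q x w q' y \<Longrightarrow> gruns SL2Q (dl d) q (phi x) w q' (phi y)"
proof (induction rule: gruns.induct)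
  case (stop q x) then show ?case by (rule gruns.stop)
next
  case (eps q1 m q x w q'' y)
  have "(q1, phi m) \<in> dl d q None" using eps(1) unfolding dl_def by force
  then show ?case using eps(3) gruns.eps by (metis Qpos_simps(1) SL2Q_simps(1) phi_mult)
next
  case (read q1 m q a x w q'' y)
  have "(q1, phi m) \<in> dl d q (Some a)" using read(1) unfolding dl_def by force
  then show ?case using read(3) gruns.read by (metis Qpos_simps(1) SL2Q_simps(1) phi_mult)
qed

lemma bwd: "gruns SL2Q (dl d) q X w q' Y \<Longrightarrow> X = phi x \<Longrightarrow> \<exists>y. Y = phi y \<and> gruns Qpos d q x w q' y"
proof (induction arbitrary: x rule: gruns.induct)
  case (stop q X) then show ?case by (auto intro: gruns.stop)
next
  case (eps q1 M q X w q'' Y)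
  then obtain m where m: "(q1, m) \<in> d q None" "M = phi m" unfolding dl_def by auto
  then have "X \<otimes>\<^bsub>SL2Q\<^esub> M = phi (x * m)" using eps(4) by (simp add: phi_mult)
  then obtain y where "Y = phi y" "gruns Qpos d q1 (x * m) w q'' y" using eps(3) by blast
  then show ?case using m(1) gruns.eps by (metis Qpos_simps(1))
next
  case (read q1 M q a X w q'' Y)
  then obtain m where m: "(q1, m) \<in> d q (Some a)" "M = phi m" unfolding dl_def by auto
  then have "X \<otimes>\<^bsub>SL2Q\<^esub> M = phi (x * m)" using read(4) by (simp add: phi_mult)
  then obtain y where "Y = phi y" "gruns Qpos d q1 (x * m) w q'' y" using read(3) by blast
  then show ?case using m(1) gruns.read by (metis Qpos_simps(1))
qed

lemma part1: "gLang Qpos Sig \<subseteq> gLang SL2Q Sig"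
proof
  fix L assume "L \<in> gLang Qpos Sig"
  then obtain Q d q0 Qa where A: "g_automaton Qpos Q Sig d q0 Qa"
    and L: "L = g_accepted Qpos Sig d q0 Qa" unfolding gLang_def by blast
  have sub: "dl d q s \<subseteq> Q \<times> carrier SL2Q" for q s
  proof
    fix z assume "z \<in> dl d q s"
    then obtain q1 m where z: "z = (q1, phi m)" "(q1, m) \<in> d q s" unfolding dl_def by auto
    from trans_in[OF A z(2)] have "q1 \<in> Q" "0 < m" by auto
    then show "z \<in> Q \<times> carrier SL2Q" using z(1) det_phi by simp
  qed
  have fin: "finite (d q s) \<Longrightarrow> finite (dl d q s)" for q s unfolding dl_def by simp
  have emp: "d q s = {} \<Longrightarrow> dl d q s = {}" for q s unfolding dl_def by simp
  have AA: "finite Q \<and> finite Sig \<and> q0 \<in> Q \<and> Qa \<subseteq> Q \<and>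
     (\<forall>q \<in> Q. \<forall>s \<in> {None} \<union> Some ` Sig.
         finite (d q s) \<and> d q s \<subseteq> Q \<times> carrier Qpos) \<and>
     (\<forall>q s. q \<notin> Q \<or> s \<notin> {None} \<union> Some ` Sig \<longrightarrow> d q s = {})"
    using A unfolding g_automaton_def .
  then have a: "finite Q" "finite Sig" "q0 \<in> Q" "Qa \<subseteq> Q"
    "\<forall>q \<in> Q. \<forall>s \<in> {None} \<union> Some ` Sig. finite (d q s)"
    "\<forall>q s. q \<notin> Q \<or> s \<notin> {None} \<union> Some ` Sig \<longrightarrow> d q s = {}"
    by blast+
  have f1: "finite (dl d q s)" if "q \<in> Q" "s \<in> {None} \<union> Some ` Sig" for q s
    by (rule fin[OF a(5)[rule_format, OF that]])
  have f2: "dl d q s = {}" if "q \<notin> Q \<or> s \<notin> {None} \<union> Some ` Sig" for q s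
    by (rule emp[OF a(6)[rule_format, OF that]])
  have "g_automaton SL2Q Q Sig (dl d) q0 Qa"
    unfolding g_automaton_def
    apply (intro conjI)
         apply (rule a(1))
        apply (rule a(2))
       apply (rule a(3))
      apply (rule a(4))
     apply (intro ballI conjI)
      apply (erule (1) f1)
     apply (rule sub)
    apply (intro allI impI)
    apply (erule f2)
    done
  moreover have "L = g_accepted SL2Q Sig (dl d) q0 Qa"
  proof -
    have "gruns SL2Q (dl d) q0 (mat 1) w qf (mat 1) \<longleftrightarrow> gruns Qpos d q0 1 w qf 1" for w qf
    proof
      assume "gruns SL2Q (dl d) q0 (mat 1) w qf (mat 1)"
      from bwd[OF this phi_1[symmetric]] obtain y where y: "mat 1 = phi y" "gruns Qpos d q0 1 w qf y"
        by blast
      have "y = 1" by (rule phi_eq_1) (use y(1) in metis)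
      then show "gruns Qpos d q0 1 w qf 1" using y(2) by simp
    next
      assume "gruns Qpos d q0 1 w qf 1"
      then show "gruns SL2Q (dl d) q0 (mat 1) w qf (mat 1)" using fwd[of d q0 1 w qf 1] phi_1 by simp
    qed
    then show ?thesis unfolding L g_accepted_def by simp
  qed
  ultimately show "L \<in> gLang SL2Q Sig" unfolding gLang_def by (intro CollectI exI conjI) simp_all
qed


definition Mof :: "nat \<Rightarrow> rat^2^2" where "Mof a = (if a = 0 then mk 1 1 0 1 else mk 1 0 1 1)"
definition Miv :: "nat \<Rightarrow> rat^2^2" where "Miv a = (if a = 0 then mk 1 (-1) 0 1 else mk 1 0 (-1) 1)"

primrec P :: "nat list \<Rightarrow> rat^2^2" where
  "P [] = mat 1" | "P (a # v) = Mof a ** P v"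
primrec Pi :: "nat list \<Rightarrow> rat^2^2" where
  "Pi [] = mat 1" | "Pi (a # v) = Miv a ** Pi v"

lemma Mof_Miv: "Mof a ** Miv a = mat 1" "Miv a ** Mof a = mat 1"
  by (simp_all add: Mof_def Miv_def eq2 mm2 mat1_2)

lemma P_snoc: "P (u @ [a]) = P u ** Mof a"
  by (induction u) (simp_all add: matrix_mul_assoc)

lemma Pi_rev: "Pi v ** P (rev v) = mat 1"
proof (induction v)
  case Nil then show ?case by simp
next
  case (Cons a v)
  have "Pi (a # v) ** P (rev (a # v)) = Miv a ** ((Pi v ** P (rev v)) ** Mof a)"
    by (simp add: P_snoc matrix_mul_assoc)
  also have "\<dots> = mat 1" using Cons Mof_Miv by simp
  finally show ?case .
qed

lemma P_Pi: "P (rev v) ** Pi v = mat 1"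
proof (induction v)
  case Nil then show ?case by simp
next
  case (Cons a v)
  have "P (rev (a # v)) ** Pi (a # v) = P (rev v) ** ((Mof a ** Miv a) ** Pi v)"
    by (simp add: P_snoc matrix_mul_assoc)
  also have "\<dots> = mat 1" using Cons Mof_Miv by simp
  finally show ?case .
qed

definition nn :: "rat^2^2 \<Rightarrow> bool" where
  "nn M \<longleftrightarrow> 0 \<le> M$1$1 \<and> 0 \<le> M$1$2 \<and> 0 \<le> M$2$1 \<and> 0 \<le> M$2$2"

lemma nn_Mof: "nn N \<Longrightarrow> nn (Mof a ** N)"
  unfolding nn_def Mof_def by (simp add: mm2)

lemma P_nn: "u \<in> lists {0,1} \<Longrightarrow> nn (P u)"
proof (induction u)
  case Nil then show ?case by (simp add: nn_def mat1_2)
next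
  case (Cons a u) then show ?case using nn_Mof by simp
qed

lemma det_Mof: "det (Mof a) = 1" by (simp add: Mof_def)

lemma P_det: "det (P u) = 1"
  by (induction u) (simp_all add: det_mul det_Mof)

lemma cancel: assumes "M ** Mof a = N ** Mof a" shows "M = N"
proof -
  have "M = (M ** Mof a) ** Miv a" by (simp add: matrix_mul_assoc[symmetric] Mof_Miv)
  also have "\<dots> = (N ** Mof a) ** Miv a" using assms by simp
  also have "\<dots> = N" by (simp add: matrix_mul_assoc[symmetric] Mof_Miv)
  finally show ?thesis .
qed

lemma not_one: assumes "nn N" shows "N ** Mof b \<noteq> mat 1"
proof
  assume "N ** Mof b = mat 1"
  then have "(N ** Mof b) ** Miv b = Miv b" by simp
  then have "N = Miv b" by (simp add: matrix_mul_assoc[symmetric] Mof_Miv)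
  then show False using assms by (auto simp: nn_def Miv_def split: if_splits)
qed

lemma AB_ne: assumes "nn M" "nn N" "det M = 1" shows "M ** Mof 0 \<noteq> N ** Mof 1"
proof
  assume "M ** Mof 0 = N ** Mof 1"
  then have e: "M$1$1 = N$1$1 + N$1$2" "M$1$1 + M$1$2 = N$1$2"
     "M$2$1 = N$2$1 + N$2$2" "M$2$1 + M$2$2 = N$2$2"
    by (simp_all add: eq2 mm2 Mof_def)
  then have "M$1$2 = 0" "M$2$2 = 0" using assms(1,2) unfolding nn_def by linarith+
  then show False using assms(3) by (simp add: det_2)
qed

lemma P_inj: "u \<in> lists {0,1} \<Longrightarrow> u' \<in> lists {0,1} \<Longrightarrow> P u = P u' \<Longrightarrow> u = u'"
proof (induction u arbitrary: u' rule: rev_induct)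
  case Nil
  show ?case
  proof (cases u' rule: rev_exhaust)
    case (snoc v b)
    then have "P v ** Mof b = mat 1" using Nil.prems(3) by (simp add: P_snoc)
    moreover have "v \<in> lists {0,1}" using Nil.prems(2) snoc by simp
    ultimately show ?thesis using not_one P_nn by blast
  qed simp
next
  case (snoc a u)
  show ?case
  proof (cases u' rule: rev_exhaust)
    case Nil
    then have "P u ** Mof a = mat 1" using snoc.prems(3) by (simp add: P_snoc)
    moreover have "u \<in> lists {0,1}" using snoc.prems(1) by simp
    ultimately show ?thesis using not_one P_nn by blast
  next
    case (snoc v b)
    have E: "P u ** Mof a = P v ** Mof b" using snoc.prems(3) snoc by (simp add: P_snoc)
    have ul: "u \<in> lists {0,1}" "v \<in> lists {0,1}" using snoc.prems(1,2) snoc by simp_all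
    have ab: "a \<in> {0,1}" "b \<in> {0,1}" using snoc.prems(1,2) snoc by simp_all
    show ?thesis
    proof (cases "a = b")
      case True
      then have "P u = P v" using E cancel by blast
      then have "u = v" using snoc.IH ul by blast
      then show ?thesis using snoc True by simp
    next
      case False
      then have "(a = 0 \<and> b = 1) \<or> (a = 1 \<and> b = 0)" using ab by auto
      then show ?thesis
      proof
        assume "a = 0 \<and> b = 1"
        then show ?thesis using AB_ne[OF P_nn[OF ul(1)] P_nn[OF ul(2)] P_det] E by simp
      next
        assume "a = 1 \<and> b = 0"
        then show ?thesis using AB_ne[OF P_nn[OF ul(2)] P_nn[OF ul(1)] P_det] E by simp
      qed
    qed
  qed
qed

definition dS :: "nat \<Rightarrow> nat option \<Rightarrow> (nat \<times> (rat^2^2)) set" where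
  "dS q s = (case s of None \<Rightarrow> {} | Some a \<Rightarrow>
     if q = 0 \<and> a \<in> {0,1} then {(0, Mof a)}
     else if q = 0 \<and> a = 2 then {(1, mat 1)}
     else if q = 1 \<and> a \<in> {0,1} then {(1, Miv a)} else {})"

lemma dS_aut: "g_automaton SL2Q {0,1} {0,1,2} dS 0 {1}"
  unfolding g_automaton_def dS_def
  by (auto simp: Mof_def Miv_def split: option.splits)

lemma run1: "gruns SL2Q dS q X v q' Y \<Longrightarrow> q = 1 \<Longrightarrow> q' = 1 \<and> v \<in> lists {0,1} \<and> Y = X ** Pi v"
proof (induction rule: gruns.induct)
  case (stop q x) then show ?case by simp
next
  case (eps q1 m q x w q'' y) then show ?case by (simp add: dS_def)
next
  case (read q1 m q a x w q'' y)
  then have "q1 = 1" "m = Miv a" "a \<in> {0,1}" by (auto simp: dS_def split: if_splits)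
  then show ?case using read by (auto simp: matrix_mul_assoc)
qed

lemma run0: "gruns SL2Q dS q X w q' Y \<Longrightarrow> q = 0 \<Longrightarrow>
  (q' = 0 \<and> w \<in> lists {0,1} \<and> Y = X ** P w) \<or>
  (\<exists>u v. w = u @ 2 # v \<and> u \<in> lists {0,1} \<and> v \<in> lists {0,1} \<and> q' = 1 \<and> Y = X ** P u ** Pi v)"
proof (induction rule: gruns.induct)
  case (stop q x) then show ?case by simp
next
  case (eps q1 m q x w q'' y) then show ?case by (simp add: dS_def)
next
  case (read q1 m q a x w q'' y)
  show ?case
  proof (cases "a = 2")
    case True
    then have "q1 = 1" "m = mat 1" using read by (auto simp: dS_def)
    then have "q'' = 1 \<and> w \<in> lists {0,1} \<and> y = x ** Pi w" using run1[OF read(2)] by simp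
    then show ?thesis using True by (intro disjI2 exI[of _ "[]"] exI[of _ w]) auto
  next
    case False
    then have h: "q1 = 0" "m = Mof a" "a \<in> {0,1}" using read by (auto simp: dS_def split: if_splits)
    from read.IH[OF h(1)] show ?thesis
    proof
      assume "q'' = 0 \<and> w \<in> lists {0, 1} \<and> y = x \<otimes>\<^bsub>SL2Q\<^esub> m ** P w"
      then show ?thesis using h by (auto simp: matrix_mul_assoc)
    next
      assume "\<exists>u v. w = u @ 2 # v \<and> u \<in> lists {0, 1} \<and> v \<in> lists {0, 1} \<and> q'' = 1 \<and>
          y = x \<otimes>\<^bsub>SL2Q\<^esub> m ** P u ** Pi v"
      then obtain u v where "w = u @ 2 # v" "u \<in> lists {0, 1}" "v \<in> lists {0, 1}" "q'' = 1"
          "y = x ** m ** P u ** Pi v" by auto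
      then show ?thesis using h
        by (intro disjI2 exI[of _ "a # u"] exI[of _ v]) (auto simp: matrix_mul_assoc)
    qed
  qed
qed

lemma run0c: "u \<in> lists {0,1} \<Longrightarrow> gruns SL2Q dS 0 X u 0 (X ** P u)"
proof (induction u arbitrary: X)
  case Nil then show ?case using gruns.stop[of SL2Q dS 0 X] by simp
next
  case (Cons a u)
  have "(0, Mof a) \<in> dS 0 (Some a)" using Cons by (auto simp: dS_def)
  moreover have "gruns SL2Q dS 0 (X \<otimes>\<^bsub>SL2Q\<^esub> Mof a) u 0 ((X ** Mof a) ** P u)"
    using Cons by simp
  ultimately show ?case using gruns.read by (metis P.simps(2) matrix_mul_assoc)
qed

lemma run1c: "v \<in> lists {0,1} \<Longrightarrow> gruns SL2Q dS 1 X v 1 (X ** Pi v)"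
proof (induction v arbitrary: X)
  case Nil then show ?case using gruns.stop[of SL2Q dS 1 X] by simp
next
  case (Cons a v)
  have "(1, Miv a) \<in> dS 1 (Some a)" using Cons by (auto simp: dS_def)
  moreover have "gruns SL2Q dS 1 (X \<otimes>\<^bsub>SL2Q\<^esub> Miv a) v 1 ((X ** Miv a) ** Pi v)"
    using Cons by simp
  ultimately show ?case using gruns.read by (metis Pi.simps(2) matrix_mul_assoc)
qed

lemma acc_sub: "g_accepted SL2Q {0,1,2} dS 0 {1} \<subseteq> Lpal"
proof
  fix w assume "w \<in> g_accepted SL2Q {0,1,2} dS 0 {1}"
  then have "gruns SL2Q dS 0 (mat 1) w 1 (mat 1)" unfolding g_accepted_def by simp
  from run0[OF this refl] obtain u v where uv: "w = u @ 2 # v" "u \<in> lists {0,1}" "v \<in> lists {0,1}"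
    "mat 1 = mat 1 ** P u ** Pi v" by auto
  then have e: "P u ** Pi v = mat 1" by simp
  have "P u = (P u ** Pi v) ** P (rev v)"
    by (simp add: matrix_mul_assoc[symmetric] Pi_rev)
  then have "P u = P (rev v)" using e by simp
  moreover have "rev v \<in> lists {0,1}" using uv(3) unfolding lists_eq_set by simp
  ultimately have "u = rev v" using P_inj uv(2) by blast
  then have "w = u @ 2 # rev u" using uv(1) by simp
  then show "w \<in> Lpal" unfolding Lpal_def using uv(2) by blast
qed

lemma acc_sup: "Lpal \<subseteq> g_accepted SL2Q {0,1,2} dS 0 {1}"
proof
  fix w assume "w \<in> Lpal"
  then obtain u where u: "w = u @ 2 # rev u" "u \<in> lists {0,1}" unfolding Lpal_def by blast
  have r: "rev u \<in> lists {0,1}" using u(2) unfolding lists_eq_set by simp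
  have 1: "gruns SL2Q dS 0 (mat 1) u 0 (P u)" using run0c[OF u(2), of "mat 1"] by simp
  have t: "(1, mat 1) \<in> dS 0 (Some 2)" by (simp add: dS_def)
  have "gruns SL2Q dS 1 (P u ** mat 1) (rev u) 1 ((P u ** mat 1) ** Pi (rev u))"
    by (rule run1c[OF r])
  moreover have "(P u ** mat 1) ** Pi (rev u) = mat 1" using P_Pi[of "rev u"] by simp
  ultimately have "gruns SL2Q dS 1 (P u \<otimes>\<^bsub>SL2Q\<^esub> mat 1) (rev u) 1 (mat 1)" by simp
  with t have "gruns SL2Q dS 0 (P u) (2 # rev u) 1 (mat 1)" by (rule gruns.read)
  from gruns_append[OF 1 this] have "gruns SL2Q dS 0 (mat 1) w 1 (mat 1)" using u(1) by simp
  moreover have "w \<in> lists {0,1,2}" using u(1) u(2) r by auto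
  ultimately show "w \<in> g_accepted SL2Q {0,1,2} dS 0 {1}" unfolding g_accepted_def by simp
qed

lemma Lpal_SL: "Lpal \<in> gLang SL2Q {0,1,2}"
proof -
  have "Lpal = g_accepted SL2Q {0,1,2} dS 0 {1}" using acc_sub acc_sup by (rule antisym[symmetric])
  then show ?thesis unfolding gLang_def
    by (intro CollectI exI[of _ "{0,1}"] exI[of _ dS] exI[of _ 0] exI[of _ "{1}"] conjI dS_aut)
qed

theorem theorem3p12:
  shows "(\<forall>Sig :: 'a set. finite Sig \<longrightarrow> gLang Qpos Sig \<subseteq> gLang SL2Q Sig) \<and>
         (\<exists>Sig :: nat set. finite Sig \<and> gLang Qpos Sig \<subset> gLang SL2Q Sig)"
proof
  show "\<forall>Sig :: 'a set. finite Sig \<longrightarrow> gLang Qpos Sig \<subseteq> gLang SL2Q Sig"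
    by (intro allI impI) (rule part1)
  have "gLang Qpos {0,1,2::nat} \<subset> gLang SL2Q {0,1,2}"
  proof
    show "gLang Qpos {0,1,2::nat} \<subseteq> gLang SL2Q {0,1,2}" by (rule part1)
    show "gLang Qpos {0,1,2::nat} \<noteq> gLang SL2Q {0,1,2}"
    proof
      assume "gLang Qpos {0,1,2::nat} = gLang SL2Q {0,1,2}"
      then have "Lpal \<in> gLang Qpos {0,1,2}" using Lpal_SL by simp
      then show False using not_Qpos by simp
    qed
  qed
  then show "\<exists>Sig :: nat set. finite Sig \<and> gLang Qpos Sig \<subset> gLang SL2Q Sig"
    by (intro exI[of _ "{0,1,2}"]) simp
qed

end
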